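(* Let $\sigma$ be any of the softmax, softmax-1 or Bayes-softmax activations and consider the gradient flow $\partial_\tau m=-\nabla_m\tilde{\mathcal E}_\sigma$, $\partial_\tau r=-\nabla_r\tilde{\mathcal E}_\sigma$, $\partial_\tau b=-\nabla_b\tilde{\mathcal E}_\sigma$, $\partial_\tau v=-\nabla_v\tilde{\mathcal E}_\sigma$ on the reparameterized loss $\tilde{\mathcal E}_\sigma(m,r,b,v)$. Let the unspecialized manifold $\mathcal M_{\mathrm u}$ be the set of $(m,r,b)$ with $m=\mathbf 1_H\tilde m^\top$ for some $\tilde m\in\mathbb R^F$, $r=\tilde r_1I_H+\tilde r_2\mathbf 1_H\mathbf 1_H^\top$ with $\tilde r_1>0$, $\tilde r_1+H\tilde r_2>0$, and $b=\tilde b\mathbf 1_H$ with $\tilde b\in\mathbb R$. Then $\mathcal M_{\mathrm u}$ is invariant under this gradient flow.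
   Context: Fix integers $L,H,F\ge1$ and a distribution $P_\theta$ on $\mathbb R^F$. $\mathbf 1_H$ is the all-ones vector. For $m\in\mathbb R^{H\times F}$, $r$ symmetric positive semidefinite $H\times H$, $b\in\mathbb R^H$, $v\in\mathbb R$: $\tilde{\mathcal E}_\sigma(m,r,b,v)=\mathbb E\big[\sum_{\ell=1}^L(\delta_{\ell,\epsilon}-\frac1H\sum_{h=1}^H\sigma(\chi,b,v;h)_\ell)^2\big]$, $\chi_{h\ell}=\sum_fm_{hf}\chi^*_{f\ell}+\sum_{h'}r_{hh'}\xi_{h'\ell}$, with $\epsilon\sim\mathrm{Unif}(\{1,\dots,L\})$, $\theta\sim P_\theta$, and conditionally independent $\chi^*_{:\ell}\sim\mathcal N(\delta_{\ell,\epsilon}\theta,I_F)$, $\xi_{:\ell}\sim\mathcal N(0,I_H)$. Activations: softmax $\sigma(\chi,b,v;h)_\ell=e^{\chi_{h\ell}}/\sum_{\ell'}e^{\chi_{h\ell'}}$; softmax-1 $v e^{\chi_{h\ell}}/(e^{b_h}+\sum_{\ell'}e^{\chi_{h\ell'}})$; Bayes-softmax $e^{\chi_{h\ell}+b_h}/(\frac1H\sum_{h'}\sum_{\ell'}e^{\chi_{h'\ell'}+b_{h'}})$. *)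

theory Defs
  imports "HOL-Probability.Probability"
begin

text \<open>Index types: 'l = positions (L = CARD('l)), 'h = heads (H = CARD('h)),
  'f = features (F = CARD('f)).  Finite types are nonempty, so L,H,F \<ge> 1.\<close>

definition std_gauss :: "'a::euclidean_space measure" where
  "std_gauss = density lborel (\<lambda>x. ennreal (\<Prod>b\<in>Basis. std_normal_density (x \<bullet> b)))"

datatype activation = Softmax | Softmax1 | BayesSoftmax

definition act_fun ::
  "activation \<Rightarrow> real^'l^'h \<Rightarrow> real^'h \<Rightarrow> real \<Rightarrow> 'h::finite \<Rightarrow> 'l::finite \<Rightarrow> real" where
  "act_fun a chi b v h l = (case a of
      Softmax \<Rightarrow> exp (chi$h$l) / (\<Sum>l'\<in>UNIV. exp (chi$h$l'))
    | Softmax1 \<Rightarrow> v * exp (chi$h$l) / (exp (b$h) + (\<Sum>l'\<in>UNIV. exp (chi$h$l')))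
    | BayesSoftmax \<Rightarrow> exp (chi$h$l + b$h) /
          ((1 / real CARD('h)) * (\<Sum>h'\<in>UNIV. \<Sum>l'\<in>UNIV. exp (chi$h'$l' + b$h'))))"

definition sample_loss ::
  "activation \<Rightarrow> real^'f^'h \<Rightarrow> real^'h^'h \<Rightarrow> real^'h \<Rightarrow> real \<Rightarrow> 'l \<Rightarrow>
     real^'l^'f \<Rightarrow> real^'l^'h \<Rightarrow> real" where
  "sample_loss a m r b v eps chistar xi =
     (let chi = m ** chistar + r ** xi in
      \<Sum>l\<in>UNIV. ((if l = eps then 1 else 0)
                  - (1 / real CARD('h::finite)) * (\<Sum>h\<in>UNIV. act_fun a chi b v h (l::'l::finite)))\<^sup>2)"

text \<open>Reparameterized loss: eps ~ Unif('l), theta ~ P, chi*_{:l} = delta_{l,eps} theta + z_{:l}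
  with z ~ N(0,I), xi ~ N(0,I), all independent.\<close>
definition Eloss ::
  "'l::finite itself \<Rightarrow> (real^'f) measure \<Rightarrow> activation \<Rightarrow> real^'f^'h \<Rightarrow> real^'h^'h \<Rightarrow> real^'h \<Rightarrow> real \<Rightarrow> real" where
  "Eloss _ P a m r b v =
     (1 / real CARD('l)) * (\<Sum>eps\<in>(UNIV::'l set).
        LINT theta|P. LINT z|(std_gauss :: (real^'l^'f) measure). LINT xi|(std_gauss :: (real^'l^'h) measure).
          sample_loss a m r b v eps
            (\<chi> f l. z$f$l + (if l = eps then theta$f else 0)) xi)"

definition Eloss_param ::
  "(real^'f) measure \<Rightarrow> activation \<Rightarrow> 'l::finite itself \<Rightarrow>
     (real^'f^'h) \<times> (real^'h^'h) \<times> (real^'h) \<times> real \<Rightarrow> real" where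
  "Eloss_param P a L x = (case x of (m, r, b, v) \<Rightarrow> Eloss L P a m r b v)"

definition unspec_manifold :: "((real^'f^'h::finite) \<times> (real^'h^'h) \<times> (real^'h)) set" where
  "unspec_manifold = {(m, r, b).
     (\<exists>mt::real^'f. \<forall>h. m$h = mt) \<and>
     (\<exists>r1 r2::real. r1 > 0 \<and> r1 + real CARD('h) * r2 > 0 \<and>
         (\<forall>i j. r$i$j = r1 * (if i = j then 1 else 0) + r2)) \<and>
     (\<exists>bt::real. \<forall>h. b$h = bt)}"

end

theory Submission
  imports Defs
begin


lemma lin_meas:
  fixes f :: "'a::euclidean_space \<Rightarrow> 'b::euclidean_space"
  assumes "linear f" shows "f \<in> borel_measurable borel"
  by (intro borel_measurable_continuous_onI linear_continuous_on) (use assms linear_conv_bounded_linear in auto)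

lemma lborel_basis_iso:
  fixes \<psi> :: "'a::euclidean_space \<Rightarrow> 'b::euclidean_space" and \<psi>' :: "'b \<Rightarrow> 'a"
  assumes lin: "linear \<psi>" and inv1: "\<And>x. \<psi>' (\<psi> x) = x" and inv2: "\<And>y. \<psi> (\<psi>' y) = y"
   and inn: "\<And>x y. \<psi> x \<bullet> \<psi> y = x \<bullet> y"
   and bas: "\<psi> ` Basis = Basis"
  shows "distr lborel borel \<psi> = lborel"
proof (rule lborel_eqI[symmetric])
  fix l u :: 'b assume le: "\<And>b. b \<in> Basis \<Longrightarrow> l \<bullet> b \<le> u \<bullet> b"
  have key: "\<And>w b. w \<bullet> \<psi> b = \<psi>' w \<bullet> b"
    by (metis inn inv2)
  have pre: "\<psi> -` box l u = box (\<psi>' l) (\<psi>' u)"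
  proof -
    have "x \<in> \<psi> -` box l u \<longleftrightarrow> x \<in> box (\<psi>' l) (\<psi>' u)" for x
    proof -
      have "x \<in> \<psi> -` box l u \<longleftrightarrow> (\<forall>c\<in>\<psi> ` Basis. l \<bullet> c < \<psi> x \<bullet> c \<and> \<psi> x \<bullet> c < u \<bullet> c)"
        by (simp add: mem_box bas)
      also have "\<dots> \<longleftrightarrow> (\<forall>b\<in>Basis. \<psi>' l \<bullet> b < x \<bullet> b \<and> x \<bullet> b < \<psi>' u \<bullet> b)"
        by (simp add: key inv1)
      finally show ?thesis by (simp add: mem_box)
    qed
    then show ?thesis by blast
  qed
  have injb: "inj_on \<psi> Basis" by (metis inv1 inj_on_inverseI)
  have le': "\<And>b. b \<in> Basis \<Longrightarrow> \<psi>' l \<bullet> b \<le> \<psi>' u \<bullet> b"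
    using le bas by (metis image_eqI key)
  have "emeasure (distr lborel borel \<psi>) (box l u) = emeasure lborel (box (\<psi>' l) (\<psi>' u))"
    using lin_meas[OF lin] by (simp add: emeasure_distr pre[symmetric])
  also have "\<dots> = (\<Prod>b\<in>Basis. (\<psi>' u - \<psi>' l) \<bullet> b)"
    using le' by (simp add: emeasure_lborel_box_eq inner_diff_left)
  also have "\<dots> = (\<Prod>b\<in>Basis. (u - l) \<bullet> \<psi> b)"
    by (simp add: inner_diff_left key[symmetric])
  also have "\<dots> = (\<Prod>c\<in>\<psi> ` Basis. (u - l) \<bullet> c)"
    using injb by (simp add: prod.reindex)
  finally show "emeasure (distr lborel borel \<psi>) (box l u) = (\<Prod>b\<in>Basis. (u - l) \<bullet> b)"
    by (simp add: bas)
qed simp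

lemma basis_gen:
  fixes \<delta> :: "'c::euclidean_space \<Rightarrow> 'd::euclidean_space" and x :: 'c
assumes bj: "bij_betw \<delta> Basis Basis" and b0: "b0 \<in> Basis"
shows "(\<Sum>b\<in>Basis. (x \<bullet> b) *\<^sub>R \<delta> b) \<bullet> \<delta> b0 = x \<bullet> b0"
proof -
  have inj: "inj_on \<delta> Basis" using bj bij_betw_def by blast
  have "(\<Sum>b\<in>Basis. (x \<bullet> b) *\<^sub>R \<delta> b) \<bullet> \<delta> b0 = (\<Sum>b\<in>Basis. (x \<bullet> b) * (\<delta> b \<bullet> \<delta> b0))"
    by (simp add: inner_sum_left)
  also have "\<dots> = (\<Sum>b\<in>Basis. if b = b0 then x \<bullet> b else 0)"
  proof (rule sum.cong)
    fix b :: 'c assume b: "b \<in> Basis"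
    have "\<delta> b \<in> Basis" "\<delta> b0 \<in> Basis" using bj b b0 bij_betwE by blast+
    moreover have "\<delta> b = \<delta> b0 \<longleftrightarrow> b = b0" using inj b b0 inj_on_eq_iff by metis
    ultimately show "(x \<bullet> b) * (\<delta> b \<bullet> \<delta> b0) = (if b = b0 then x \<bullet> b else 0)"
      by (simp add: inner_Basis)
  qed simp
  also have "\<dots> = x \<bullet> b0" using b0 by simp
  finally show ?thesis .
qed

lemma basis_iso_exists:
  assumes "DIM('a::euclidean_space) = DIM('b::euclidean_space)"
  obtains \<psi> :: "'a::euclidean_space \<Rightarrow> 'b::euclidean_space" and \<psi>' where "linear \<psi>" "linear \<psi>'"
    "\<And>x. \<psi>' (\<psi> x) = x" "\<And>y. \<psi> (\<psi>' y) = y"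
    "\<And>x y. \<psi> x \<bullet> \<psi> y = x \<bullet> y" "\<And>x y. \<psi>' x \<bullet> \<psi>' y = x \<bullet> y"
    "\<psi> ` Basis = Basis" "\<psi>' ` Basis = Basis"
proof -
  obtain \<beta> :: "'a \<Rightarrow> 'b" where bij: "bij_betw \<beta> Basis Basis"
    using finite_same_card_bij[of "Basis::'a set" "Basis::'b set"] assms by auto
  define \<gamma> where "\<gamma> = inv_into Basis \<beta>"
  have bij2: "bij_betw \<gamma> Basis Basis" unfolding \<gamma>_def using bij by (rule bij_betw_inv_into)
  define \<psi> where "\<psi> x = (\<Sum>b\<in>Basis. (x \<bullet> b) *\<^sub>R \<beta> b)" for x
  define \<psi>' where "\<psi>' y = (\<Sum>c\<in>Basis. (y \<bullet> c) *\<^sub>R \<gamma> c)" for y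
  have lin1: "linear \<psi>" unfolding \<psi>_def[abs_def]
    by (rule linearI) (simp_all add: inner_add_left scaleR_add_left sum.distrib scaleR_sum_right)
  have lin2: "linear \<psi>'" unfolding \<psi>'_def[abs_def]
    by (rule linearI) (simp_all add: inner_add_left scaleR_add_left sum.distrib scaleR_sum_right)
  have c1: "\<psi> x \<bullet> \<beta> b = x \<bullet> b" if "b \<in> Basis" for x b
    unfolding \<psi>_def using basis_gen[OF bij that] .
  have c2: "\<psi>' y \<bullet> \<gamma> c = y \<bullet> c" if "c \<in> Basis" for y c
    unfolding \<psi>'_def using basis_gen[OF bij2 that] .
  have bg: "\<beta> (\<gamma> c) = c" if "c \<in> Basis" for c
    unfolding \<gamma>_def using bij that by (meson bij_betw_inv_into_right)
  have gb: "\<gamma> (\<beta> b) = b" if "b \<in> Basis" for b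
    unfolding \<gamma>_def using bij that by (meson bij_betw_inv_into_left)
  have i1: "\<psi>' (\<psi> x) = x" for x
  proof (rule euclidean_eqI)
    fix b :: 'a assume b: "b \<in> Basis"
    have "\<beta> b \<in> Basis" using bij b bij_betwE by blast
    then show "\<psi>' (\<psi> x) \<bullet> b = x \<bullet> b" using c2[of "\<beta> b" "\<psi> x"] c1[OF b] gb[OF b] by simp
  qed
  have i2: "\<psi> (\<psi>' y) = y" for y
  proof (rule euclidean_eqI)
    fix c :: 'b assume c: "c \<in> Basis"
    have "\<gamma> c \<in> Basis" using bij2 c bij_betwE by blast
    then show "\<psi> (\<psi>' y) \<bullet> c = y \<bullet> c" using c1[of "\<gamma> c" "\<psi>' y"] c2[OF c] bg[OF c] by simp
  qed
  have n1: "\<psi> x \<bullet> \<psi> y = x \<bullet> y" for x y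
  proof -
    have "\<psi> x \<bullet> \<psi> y = (\<Sum>c\<in>Basis. (\<psi> x \<bullet> c) * (\<psi> y \<bullet> c))" by (rule euclidean_inner)
    also have "\<dots> = (\<Sum>b\<in>Basis. (\<psi> x \<bullet> \<beta> b) * (\<psi> y \<bullet> \<beta> b))"
      using bij by (simp add: sum.reindex_bij_betw[symmetric, of \<beta>])
    also have "\<dots> = (\<Sum>b\<in>Basis. (x \<bullet> b) * (y \<bullet> b))" by (simp add: c1)
    also have "\<dots> = x \<bullet> y" by (rule euclidean_inner[symmetric])
    finally show ?thesis .
  qed
  have n2: "\<psi>' x \<bullet> \<psi>' y = x \<bullet> y" for x y
    by (metis n1 i2)
  have pb: "\<psi> b = \<beta> b" if "b \<in> Basis" for b
  proof (rule euclidean_eqI)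
    fix c :: 'b assume c: "c \<in> Basis"
    then obtain b' where b': "b' \<in> Basis" "c = \<beta> b'" using bij bij_betw_def by (metis imageE)
    have "\<beta> b \<in> Basis" "\<beta> b' \<in> Basis" using bij that b' bij_betwE by blast+
    moreover have "\<beta> b = \<beta> b' \<longleftrightarrow> b = b'" using bij b' that by (metis bij_betw_def inj_on_eq_iff)
    ultimately show "\<psi> b \<bullet> c = \<beta> b \<bullet> c" using c1[OF b'(1), of b] b' that by (auto simp: inner_Basis)
  qed
  have B1: "\<psi> ` Basis = Basis" using pb bij by (simp add: bij_betw_def)
  have B2: "\<psi>' ` Basis = Basis"
  proof -
    have "\<psi>' ` Basis = \<psi>' ` \<psi> ` Basis" by (simp add: B1)
    also have "\<dots> = Basis" by (simp add: image_image i1)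
    finally show ?thesis .
  qed
  show ?thesis using that lin1 lin2 i1 i2 n1 n2 B1 B2 by blast
qed
lemma lborel_orth_N:
  fixes f :: "real^'n::{finite,wellorder} \<Rightarrow> real^'n::_"
  assumes f: "orthogonal_transformation f"
  shows "distr lborel borel f = lborel"
proof (rule lborel_eqI[symmetric])
  have lin: "linear f" using f by (simp add: orthogonal_transformation_linear)
  have fm: "f \<in> borel_measurable borel"
    using lin by (intro borel_measurable_continuous_onI linear_continuous_on linear_conv_bounded_linear[THEN iffD1])
  fix l u :: "(real,'n) vec" assume le: "\<And>b. b \<in> Basis \<Longrightarrow> l \<bullet> b \<le> u \<bullet> b"
  let ?S = "f -` box l u"
  have bij: "bij f" using f by (rule orthogonal_transformation_bij)
  have Seq: "?S = inv f ` box l u" using bij by (simp add: bij_vimage_eq_inv_image)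
  have So: "open ?S"
    using lin by (intro open_vimage linear_continuous_on linear_conv_bounded_linear[THEN iffD1]) auto
  have Sb: "bounded ?S" unfolding Seq
    using f orthogonal_transformation_inv orthogonal_transformation_linear
    by (metis bounded_box bounded_linear_image linear_conv_bounded_linear)
  have "measure lborel ?S = measure lebesgue ?S"
    using So by (simp add: borel_open)
  also have "\<dots> = measure lebesgue (box l u)"
    unfolding Seq by (rule measure_orthogonal_image) (auto intro: orthogonal_transformation_inv f lmeasurable_open)
  also have "\<dots> = measure lborel (box l u)"
    by (simp add: borel_open)
  finally have meq: "measure lborel ?S = measure lborel (box l u)" .
  have "emeasure (distr lborel borel f) (box l u) = emeasure lborel ?S"
    using fm by (simp add: emeasure_distr borel_open)
  also have "\<dots> = ennreal (measure lborel ?S)"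
    using Sb So by (intro emeasure_eq_ennreal_measure) (use emeasure_bounded_finite[OF Sb] in auto)
  also have "\<dots> = emeasure lborel (box l u)"
    using meq emeasure_eq_ennreal_measure[of lborel "box l u"] emeasure_lborel_box_finite[of l u] by simp
  also have "\<dots> = (\<Prod>b\<in>Basis. (u - l) \<bullet> b)"
    using le by (simp add: emeasure_lborel_box_eq inner_diff_left)
  finally show "emeasure (distr lborel borel f) (box l u) = (\<Prod>b\<in>Basis. (u - l) \<bullet> b)" .
qed simp

lemma lborel_orth:
  fixes f :: "'a::euclidean_space \<Rightarrow> 'a"
  assumes dim: "DIM('a) = CARD('k::finite)" and f: "orthogonal_transformation f"
  shows "distr lborel borel f = lborel"
proof -
  have dim2: "DIM('a \<times> 'a) = DIM(real^('k bit0))" using dim by simp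
  obtain \<psi> :: "'a \<times> 'a \<Rightarrow> real^('k bit0)" and \<psi>' where
    p: "linear \<psi>" "linear \<psi>'"
    "\<And>x. \<psi>' (\<psi> x) = x" "\<And>y. \<psi> (\<psi>' y) = y"
    "\<And>x y. \<psi> x \<bullet> \<psi> y = x \<bullet> y" "\<And>x y. \<psi>' x \<bullet> \<psi>' y = x \<bullet> y"
    "\<psi> ` Basis = Basis" "\<psi>' ` Basis = Basis"
    using basis_iso_exists[OF dim2] by blast
  have linf: "linear f" using f orthogonal_transformation_linear by blast
  define F where "F = (\<lambda>z::'a\<times>'a. (f (fst z), snd z))"
  have linF: "linear F" unfolding F_def
    using linf by (intro linearI) (auto simp: linear_add linear_cmul)
  have nF: "norm (F z) = norm z" for z
    using f by (cases z) (simp add: F_def norm_Pair orthogonal_transformation_norm)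
  define Ft where "Ft = (\<lambda>y. \<psi> (F (\<psi>' y)))"
  have nps: "norm (\<psi> w) = norm w" for w using p(5) by (simp add: norm_eq_sqrt_inner)
  have nps': "norm (\<psi>' w) = norm w" for w using p(6) by (simp add: norm_eq_sqrt_inner)
  have "orthogonal_transformation Ft"
    unfolding orthogonal_transformation Ft_def
    using p(1,2) linF by (auto simp: nps nps' nF intro: linear_compose[unfolded o_def])
  then have dFt: "distr lborel borel Ft = lborel" by (rule lborel_orth_N)
  have L1: "distr lborel borel \<psi>' = (lborel :: ('a \<times> 'a) measure)"
    by (rule lborel_basis_iso[OF p(2) p(4) p(3) p(6) p(8)])
  have m\<psi>': "\<psi>' \<in> borel_measurable borel" by (rule lin_meas[OF p(2)])
  have mF: "F \<in> borel_measurable borel" by (rule lin_meas[OF linF])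
  have mFt: "Ft \<in> borel_measurable borel" unfolding Ft_def
    using lin_meas[OF p(1)] mF m\<psi>' by measurable
  have dF: "distr lborel borel F = (lborel :: ('a \<times> 'a) measure)"
  proof -
    have "distr lborel borel F = distr (distr lborel borel \<psi>') borel F" by (simp add: L1)
    also have "\<dots> = distr lborel borel (F \<circ> \<psi>')"
      using mF m\<psi>' by (intro distr_distr) auto
    also have "F \<circ> \<psi>' = \<psi>' \<circ> Ft" by (auto simp: Ft_def p(3))
    also have "distr lborel borel (\<psi>' \<circ> Ft) = distr (distr lborel borel Ft) borel \<psi>'"
      using mFt m\<psi>' by (intro distr_distr[symmetric]) auto
    also have "\<dots> = lborel" by (simp add: dFt L1)
    finally show ?thesis .
  qed
  have mf: "f \<in> borel_measurable borel" by (rule lin_meas[OF linf])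
  show ?thesis
  proof (rule lborel_eqI[symmetric])
    fix l u :: 'a assume le: "\<And>b. b \<in> Basis \<Longrightarrow> l \<bullet> b \<le> u \<bullet> b"
    let ?C = "box (0::'a) One"
    have C1: "emeasure lborel ?C = 1"
      by (simp add: emeasure_lborel_box_eq)
    have sA: "f -` box l u \<in> sets lborel" using mf by (simp add: borel_open measurable_sets_borel)
    have sB: "box l u \<in> sets lborel" "?C \<in> sets lborel" by (auto simp: borel_open)
    have "emeasure lborel (f -` box l u) = emeasure (lborel \<Otimes>\<^sub>M lborel) (f -` box l u \<times> ?C)"
      using sA sB by (simp add: lborel.emeasure_pair_measure_Times C1)
    also have "f -` box l u \<times> ?C = F -` (box l u \<times> ?C)" by (auto simp: F_def)
    also have "emeasure (lborel \<Otimes>\<^sub>M lborel) (F -` (box l u \<times> ?C)) = emeasure (distr lborel borel F) (box l u \<times> ?C)"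
    proof -
      have o: "box l u \<times> ?C \<in> sets borel" by (intro borel_open open_Times open_box)
      show ?thesis using emeasure_distr[of F lborel borel "box l u \<times> ?C"] mF o by (simp add: lborel_prod)
    qed
    also have "\<dots> = emeasure (lborel \<Otimes>\<^sub>M lborel) (box l u \<times> ?C)"
      by (simp add: dF lborel_prod)
    also have "\<dots> = emeasure lborel (box l u)"
      using sB by (simp add: lborel.emeasure_pair_measure_Times C1)
    finally have "emeasure lborel (f -` box l u) = emeasure lborel (box l u)" .
    then show "emeasure (distr lborel borel f) (box l u) = (\<Prod>b\<in>Basis. (u - l) \<bullet> b)"
      using mf le by (simp add: emeasure_distr borel_open emeasure_lborel_box_eq inner_diff_left)
  qed simp
qed

lemma sets_std_gauss[simp]: "sets (std_gauss :: 'a::euclidean_space measure) = sets borel"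
  by (simp add: std_gauss_def)

lemma meas_std_gauss: "measurable (std_gauss :: 'a::euclidean_space measure) N = measurable borel N"
  by (rule measurable_cong_sets) auto

lemma gauss_dens_norm:
  fixes x :: "'a::euclidean_space"
  shows "(\<Prod>b\<in>Basis. std_normal_density (x \<bullet> b)) = (1 / sqrt (2 * pi)) ^ DIM('a) * exp (- (norm x)\<^sup>2 / 2)"
proof -
  have "(\<Prod>b\<in>Basis. std_normal_density (x \<bullet> b)) = (\<Prod>b\<in>Basis. (1 / sqrt (2 * pi)) * exp (- (x \<bullet> b)\<^sup>2 / 2))"
    by (simp add: std_normal_density_def normal_density_def)
  also have "\<dots> = (1 / sqrt (2 * pi)) ^ DIM('a) * exp (\<Sum>b\<in>Basis. - (x \<bullet> b)\<^sup>2 / 2)"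
    by (simp only: prod.distrib prod_constant exp_sum[OF finite_Basis])
  also have "(\<Sum>b\<in>Basis. - (x \<bullet> b)\<^sup>2 / 2) = - (norm x)\<^sup>2 / 2"
  proof -
    have "(norm x)\<^sup>2 = (\<Sum>b\<in>Basis. (x \<bullet> b) * (x \<bullet> b))"
      by (simp add: power2_norm_eq_inner euclidean_inner[of x x])
    then show ?thesis by (simp add: sum_divide_distrib[symmetric] sum_negf power2_eq_square)
  qed
  finally show ?thesis .
qed

lemma std_gauss_distr_orth:
  fixes f :: "'a::euclidean_space \<Rightarrow> 'a"
  assumes dim: "DIM('a) = CARD('k::finite)" and f: "orthogonal_transformation f"
  shows "distr std_gauss borel f = std_gauss"
proof -
  define \<rho> where "\<rho> = (\<lambda>x::'a. ennreal (\<Prod>b\<in>Basis. std_normal_density (x \<bullet> b)))"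
  have inv: "\<rho> (f x) = \<rho> x" for x
    using f by (simp add: \<rho>_def gauss_dens_norm orthogonal_transformation_norm)
  have mf: "f \<in> lborel \<rightarrow>\<^sub>M borel"
    using lin_meas[OF orthogonal_transformation_linear[OF f]] by simp
  have m\<rho>: "\<rho> \<in> borel_measurable borel" unfolding \<rho>_def by measurable
  have "std_gauss = density lborel \<rho>" by (simp add: std_gauss_def \<rho>_def)
  moreover have "density (distr lborel borel f) \<rho> = distr (density lborel (\<lambda>x. \<rho> (f x))) borel f"
    by (rule density_distr[OF m\<rho> mf])
  ultimately show ?thesis
    using lborel_orth[OF dim f] inv by simp
qed

lemma std_gauss_orth:
  fixes f :: "'a::euclidean_space \<Rightarrow> 'a" and g :: "'a \<Rightarrow> real"
  assumes dim: "DIM('a) = CARD('k::finite)" and f: "orthogonal_transformation f"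
  shows "(LINT x|std_gauss. g (f x)) = (LINT x|std_gauss. g x)"
proof -
  have D: "distr std_gauss borel f = std_gauss" by (rule std_gauss_distr_orth[OF dim f])
  have linf: "linear f" using f orthogonal_transformation_linear by blast
  have mf: "f \<in> std_gauss \<rightarrow>\<^sub>M borel"
    using lin_meas[OF linf] by (simp add: meas_std_gauss)
  have fi: "orthogonal_transformation (inv f)" using f by (rule orthogonal_transformation_inv)
  have mfi: "inv f \<in> borel \<rightarrow>\<^sub>M borel"
    using lin_meas fi orthogonal_transformation_linear by blast
  have ff: "f (inv f x) = x" for x
    using orthogonal_transformation_surj[OF f] by (simp add: surj_f_inv_f)
  show ?thesis
  proof (cases "integrable std_gauss g")
    case True
    then have mg: "g \<in> borel_measurable borel"
      using borel_measurable_integrable meas_std_gauss by metis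
    have "(LINT x|std_gauss. g x) = (LINT x|distr std_gauss borel f. g x)" by (simp add: D)
    also have "\<dots> = (LINT x|std_gauss. g (f x))" by (rule integral_distr[OF mf mg])
    finally show ?thesis by simp
  next
    case False
    have "\<not> integrable std_gauss (\<lambda>x. g (f x))"
    proof
      assume I: "integrable std_gauss (\<lambda>x. g (f x))"
      then have "(\<lambda>x. g (f x)) \<in> borel_measurable borel"
        using borel_measurable_integrable meas_std_gauss by metis
      then have "(\<lambda>x. g (f (inv f x))) \<in> borel_measurable borel"
        using mfi by measurable
      then have mg: "g \<in> borel_measurable borel" by (simp add: ff)
      have "integrable (distr std_gauss borel f) g"
        using integrable_distr_eq[OF mf mg] I by simp
      with False D show False by simp
    qed
    with False show ?thesis by (simp add: not_integrable_integral_eq)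
  qed
qed


lemma flow_local:
  fixes G :: "'v::real_normed_vector \<Rightarrow> 'v" and p q :: "real \<Rightarrow> 'v"
  assumes lip: "\<And>x. \<exists>e>0. \<exists>K. K-lipschitz_on (cball x e) G"
  and fp: "\<And>t. t \<in> S \<Longrightarrow> (p has_vector_derivative (- G (p t))) (at t within S)"
  and fq: "\<And>t. t \<in> S \<Longrightarrow> (q has_vector_derivative (- G (q t))) (at t within S)"
  and cS: "convex S" "closed S"
  and z: "z \<in> S" "p z = q z"
  shows "\<exists>d>0. \<forall>t\<in>S. dist t z < d \<longrightarrow> p t = q t"
proof -
  have cp: "continuous_on S p"
    using fp continuous_on_eq_continuous_within has_vector_derivative_continuous by blast
  have cq: "continuous_on S q"
    using fq continuous_on_eq_continuous_within has_vector_derivative_continuous by blast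
  obtain e K where e: "e > 0" and K0: "K-lipschitz_on (cball (p z) e) G" using lip by blast
  define K' where "K' = max K 1"
  have K: "K'-lipschitz_on (cball (p z) e) G" using K0 by (rule lipschitz_on_le) (simp add: K'_def)
  have K'pos: "K' > 0" by (simp add: K'_def)
  obtain dp where dp: "dp > 0" "\<forall>t\<in>S. dist t z < dp \<longrightarrow> dist (p t) (p z) < e"
    using cp z(1) e unfolding continuous_on_iff by blast
  obtain dq where dq: "dq > 0" "\<forall>t\<in>S. dist t z < dq \<longrightarrow> dist (q t) (q z) < e"
    using cq z(1) e unfolding continuous_on_iff by blast
  define d where "d = min (min dp dq / 2) (1 / (2 * K'))"
  have dpos: "d > 0" using dp dq K'pos by (simp add: d_def)
  define I where "I = S \<inter> cball z d"
  have Isub: "I \<subseteq> S" by (auto simp: I_def)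
  have zI: "z \<in> I" using z dpos by (simp add: I_def)
  have convI: "convex I" unfolding I_def using cS by (intro convex_Int convex_cball)
  have compI: "compact I" unfolding I_def using cS by (intro closed_Int_compact compact_cball)
  have inball: "p t \<in> cball (p z) e \<and> q t \<in> cball (p z) e" if "t \<in> I" for t
  proof -
    have "dist t z < dp" "dist t z < dq" "t \<in> S" using that dpos dp dq
      by (auto simp: I_def d_def dist_commute)
    then show ?thesis using dp dq z(2) by (auto simp: dist_commute less_imp_le)
  qed
  have cont: "continuous_on I (\<lambda>t. norm (p t - q t))"
    using cp cq Isub by (intro continuous_intros) (auto intro: continuous_on_subset)
  obtain tm where tm: "tm \<in> I" "\<And>t. t \<in> I \<Longrightarrow> norm (p t - q t) \<le> norm (p tm - q tm)"
    using continuous_attains_sup[OF compI _ cont] zI by blast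
  define M where "M = norm (p tm - q tm)"
  have bound: "norm (p t - q t) \<le> M / 2" if tI: "t \<in> I" for t
  proof -
    have der: "((\<lambda>t. p t - q t) has_derivative (\<lambda>h. h *\<^sub>R (G (q u) - G (p u)))) (at u within I)"
      if "u \<in> I" for u
    proof -
      have "((\<lambda>t. p t - q t) has_vector_derivative (- G (p u) - - G (q u))) (at u within I)"
        using fp[of u] fq[of u] that Isub
        by (intro has_vector_derivative_diff) (auto intro: has_vector_derivative_within_subset)
      then show ?thesis by (simp add: has_vector_derivative_def)
    qed
    have onb: "onorm (\<lambda>h. h *\<^sub>R (G (q u) - G (p u))) \<le> K' * M" if "u \<in> I" for u
    proof -
      have "onorm (\<lambda>h::real. h *\<^sub>R (G (q u) - G (p u))) = norm (G (q u) - G (p u))"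
        using onorm_scaleR_left[OF bounded_linear_ident] by (simp add: onorm_id)
      also have "\<dots> \<le> K' * dist (q u) (p u)"
        using lipschitz_onD[OF K] inball[OF that] by (simp add: dist_norm)
      also have "\<dots> \<le> K' * M"
        using tm(2)[OF that] K'pos by (simp add: M_def dist_norm norm_minus_commute)
      finally show ?thesis .
    qed
    have "norm ((p t - q t) - (p z - q z)) \<le> (K' * M) * norm (t - z)"
      by (rule differentiable_bound[OF convI der onb tI zI])
    also have "\<dots> \<le> (K' * M) * d"
      using tI K'pos tm by (intro mult_left_mono) (auto simp: I_def dist_norm M_def)
    also have "\<dots> \<le> (K' * M) * (1 / (2 * K'))"
      using K'pos by (intro mult_left_mono) (auto simp: d_def M_def)
    also have "\<dots> = M / 2" using K'pos by simp
    finally show ?thesis using z(2) by simp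
  qed
  have "M \<le> M / 2" using bound[OF tm(1)] by (simp add: M_def)
  then have M0: "M \<le> 0" by simp
  show ?thesis
  proof (intro exI[of _ d] conjI ballI impI dpos)
    fix t assume "t \<in> S" "dist t z < d"
    then have "t \<in> I" by (auto simp: I_def dist_commute)
    then have "norm (p t - q t) \<le> 0" using tm(2) M0 by (force simp: M_def)
    then show "p t = q t" by simp
  qed
qed

lemma flow_unique:
  fixes G :: "'v::real_normed_vector \<Rightarrow> 'v" and p q :: "real \<Rightarrow> 'v"
  assumes lip: "\<And>x. \<exists>e>0. \<exists>K. K-lipschitz_on (cball x e) G"
  and fp: "\<And>t. t \<in> {0..t1} \<Longrightarrow> (p has_vector_derivative (- G (p t))) (at t within {0..t1})"
  and fq: "\<And>t. t \<in> {0..t1} \<Longrightarrow> (q has_vector_derivative (- G (q t))) (at t within {0..t1})"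
  and s: "s \<in> {0..t1}" "p s = q s"
  and t: "t \<in> {0..t1}"
  shows "p t = q t"
proof -
  let ?S = "{0..t1::real}"
  have cp: "continuous_on ?S p"
    using fp continuous_on_eq_continuous_within has_vector_derivative_continuous by blast
  have cq: "continuous_on ?S q"
    using fq continuous_on_eq_continuous_within has_vector_derivative_continuous by blast
  define Z where "Z = {t \<in> ?S. p t - q t = 0}"
  have cl: "closedin (top_of_set ?S) Z" unfolding Z_def
    using cp cq by (intro continuous_closedin_preimage_constant continuous_intros)
  have op: "openin (top_of_set ?S) Z"
    unfolding openin_euclidean_subtopology_iff
  proof (intro conjI ballI)
    show "Z \<subseteq> ?S" by (auto simp: Z_def)
    fix z assume "z \<in> Z"
    then have "z \<in> ?S" "p z = q z" by (auto simp: Z_def)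
    then obtain d where "d > 0" "\<forall>t\<in>?S. dist t z < d \<longrightarrow> p t = q t"
      using flow_local[OF lip fp fq convex_real_interval(5) closed_real_atLeastAtMost] by blast
    then show "\<exists>e>0. \<forall>x'\<in>?S. dist x' z < e \<longrightarrow> x' \<in> Z" by (auto simp: Z_def)
  qed
  have "Z = {} \<or> Z = ?S"
    using connected_clopen[THEN iffD1, rule_format, OF connected_Icc] cl op by blast
  moreover have "s \<in> Z" using s by (simp add: Z_def)
  ultimately have "Z = ?S" by blast
  then have "t \<in> Z" using t by simp
  then show ?thesis unfolding Z_def by simp
qed

lemma grad_equiv:
  fixes E :: "'p::euclidean_space \<Rightarrow> real" and G :: "'p \<Rightarrow> 'p"
  assumes grad: "\<And>x. (E has_derivative (\<lambda>y. G x \<bullet> y)) (at x)"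
   and lin: "linear T" and inv: "\<And>x. T (T x) = x" and adj: "\<And>x y. T x \<bullet> y = x \<bullet> T y"
   and Einv: "\<And>x. E (T x) = E x"
  shows "G (T x) = T (G x)"
proof -
  have "((\<lambda>y. E (T y)) has_derivative (\<lambda>y. G (T x) \<bullet> T y)) (at x)"
    using has_derivative_compose[OF linear_imp_has_derivative[OF lin] grad[of "T x"]] .
  moreover have "((\<lambda>y. E (T y)) has_derivative (\<lambda>y. G x \<bullet> y)) (at x)"
    using grad[of x] by (simp add: Einv)
  ultimately have eq: "(\<lambda>y. G (T x) \<bullet> T y) = (\<lambda>y. G x \<bullet> y)" by (rule has_derivative_unique)
  have "G (T x) \<bullet> w = T (G x) \<bullet> w" for w
  proof -
    have "G (T x) \<bullet> w = G (T x) \<bullet> T (T w)" by (simp add: inv)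
    also have "\<dots> = G x \<bullet> T w" using fun_cong[OF eq, of "T w"] by simp
    also have "\<dots> = T (G x) \<bullet> w" by (simp add: adj)
    finally show ?thesis .
  qed
  then have h: "G (T x) \<bullet> w - T (G x) \<bullet> w = 0" for w by simp
  have "(G (T x) - T (G x)) \<bullet> (G (T x) - T (G x)) = 0"
    by (simp only: inner_diff_left h)
  then show ?thesis by simp
qed

lemma flow_sym:
  fixes E :: "'p::euclidean_space \<Rightarrow> real" and G :: "'p \<Rightarrow> 'p" and p :: "real \<Rightarrow> 'p"
  assumes grad: "\<And>x. (E has_derivative (\<lambda>y. G x \<bullet> y)) (at x)"
   and lip: "\<And>x. \<exists>e>0. \<exists>K. K-lipschitz_on (cball x e) G"
   and fp: "\<And>t. t \<in> {0..t1} \<Longrightarrow> (p has_vector_derivative (- G (p t))) (at t within {0..t1})"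
   and lin: "linear T" and inv: "\<And>x. T (T x) = x" and adj: "\<And>x y. T x \<bullet> y = x \<bullet> T y"
   and Einv: "\<And>x. E (T x) = E x"
   and s: "s \<in> {0..t1}" "T (p s) = p s"
   and t: "t \<in> {0..t1}"
  shows "T (p t) = p t"
proof -
  have bl: "bounded_linear T" using lin by (simp add: linear_conv_bounded_linear)
  have H: "((\<lambda>t. T (p t)) has_vector_derivative (- G (T (p u)))) (at u within {0..t1})"
    if "u \<in> {0..t1}" for u
  proof -
    have g: "G (T y) = T (G y)" for y using grad_equiv[where E=E and G=G and T=T, OF grad lin inv adj Einv] .
    have "((\<lambda>t. T (p t)) has_vector_derivative T (- G (p u))) (at u within {0..t1})"
    proof -
      have d: "(p has_vector_derivative (- G (p u))) (at u within {0..t1})" using fp that by blast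
      show ?thesis using bounded_linear.has_vector_derivative[OF bl d] .
    qed
    moreover have "T (- G (p u)) = - G (T (p u))" unfolding g by (rule linear_neg[OF lin])
    ultimately show ?thesis by (rule back_subst)
  qed
  have "(\<lambda>t. T (p t)) t = p t"
    by (rule flow_unique[where p="\<lambda>t. T (p t)" and q=p and G=G, OF lip H fp s t])
  then show ?thesis by simp
qed


lemma inner_mat: "(A::real^'m^'n) \<bullet> B = (\<Sum>i\<in>UNIV. \<Sum>j\<in>UNIV. A$i$j * B$i$j)"
  by (simp add: inner_vec_def)

lemma left_adj:
  fixes A :: "real^'n^'n" and X Y :: "real^'m^'n"
  shows "(A ** X) \<bullet> Y = X \<bullet> (transpose A ** Y)"
proof -
  have "(A ** X) \<bullet> Y = (\<Sum>i\<in>UNIV. \<Sum>j\<in>UNIV. \<Sum>k\<in>UNIV. A$i$k * X$k$j * Y$i$j)"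
    by (simp add: inner_mat matrix_matrix_mult_def sum_distrib_right)
  also have "\<dots> = (\<Sum>i\<in>UNIV. \<Sum>k\<in>UNIV. \<Sum>j\<in>UNIV. A$i$k * X$k$j * Y$i$j)"
    by (rule sum.cong[OF refl], rule sum.swap)
  also have "\<dots> = (\<Sum>k\<in>UNIV. \<Sum>i\<in>UNIV. \<Sum>j\<in>UNIV. A$i$k * X$k$j * Y$i$j)"
    by (rule sum.swap)
  also have "\<dots> = (\<Sum>k\<in>UNIV. \<Sum>j\<in>UNIV. \<Sum>i\<in>UNIV. A$i$k * X$k$j * Y$i$j)"
    by (rule sum.cong[OF refl], rule sum.swap)
  also have "\<dots> = X \<bullet> (transpose A ** Y)"
    by (simp add: inner_mat matrix_matrix_mult_def transpose_def sum_distrib_left mult_ac)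
  finally show ?thesis .
qed

lemma right_adj:
  fixes A :: "real^'n^'n" and X Y :: "real^'n^'m"
  shows "(X ** A) \<bullet> Y = X \<bullet> (Y ** transpose A)"
proof -
  have "(X ** A) \<bullet> Y = (\<Sum>i\<in>UNIV. \<Sum>j\<in>UNIV. \<Sum>k\<in>UNIV. X$i$k * A$k$j * Y$i$j)"
    by (simp add: inner_mat matrix_matrix_mult_def sum_distrib_right)
  also have "\<dots> = (\<Sum>i\<in>UNIV. \<Sum>k\<in>UNIV. \<Sum>j\<in>UNIV. X$i$k * A$k$j * Y$i$j)"
    by (rule sum.cong[OF refl], rule sum.swap)
  also have "\<dots> = X \<bullet> (Y ** transpose A)"
    by (simp add: inner_mat matrix_matrix_mult_def transpose_def sum_distrib_left mult_ac)
  finally show ?thesis .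
qed

lemma sum_invol:
  fixes \<sigma> :: "'a::finite \<Rightarrow> 'a"
  assumes "\<And>x. \<sigma> (\<sigma> x) = x"
  shows "(\<Sum>x\<in>UNIV. f (\<sigma> x)) = (\<Sum>x\<in>UNIV. f x)"
  by (rule sum.reindex_bij_witness[of _ \<sigma> \<sigma>]) (auto simp: assms)

lemma orth_leftQ:
  fixes Q :: "real^'h^'h"
  assumes sym: "transpose Q = Q" and inv: "Q ** Q = mat 1"
  shows "orthogonal_transformation (\<lambda>\<xi>::real^'l^'h. Q ** \<xi>)"
  unfolding orthogonal_transformation
proof (intro conjI allI)
  show "linear (\<lambda>\<xi>::real^'l^'h. Q ** \<xi>)"
    by (rule linearI) (simp_all add: matrix_add_ldistrib matrix_scalar_ac scalar_matrix_assoc)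
  fix \<xi> :: "real^'l^'h"
  have "(Q ** \<xi>) \<bullet> (Q ** \<xi>) = \<xi> \<bullet> \<xi>"
    by (simp add: left_adj sym matrix_mul_assoc inv)
  then show "norm (Q ** \<xi>) = norm \<xi>" by (simp add: norm_eq_sqrt_inner)
qed

lemma orth_perm:
  fixes \<sigma> :: "'h::finite \<Rightarrow> 'h"
  assumes inv: "\<And>x. \<sigma> (\<sigma> x) = x"
  shows "orthogonal_transformation (\<lambda>\<xi>::real^'l::finite^'h. \<chi> h l. \<xi>$(\<sigma> h)$l)"
  unfolding orthogonal_transformation
proof (intro conjI allI)
  show "linear (\<lambda>\<xi>::real^'l^'h. \<chi> h l. \<xi>$(\<sigma> h)$l)"
    by (rule linearI) (simp_all add: vec_eq_iff)
  fix \<xi> :: "real^'l^'h"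
  have "(\<chi> h l. \<xi>$(\<sigma> h)$l) \<bullet> (\<chi> h l. \<xi>$(\<sigma> h)$l) = \<xi> \<bullet> \<xi>"
    using sum_invol[OF inv, of "\<lambda>h. \<Sum>l\<in>UNIV. \<xi>$h$l * \<xi>$h$l"] by (simp add: inner_mat)
  then show "norm (\<chi> h l. \<xi>$(\<sigma> h)$l) = norm \<xi>" by (simp add: norm_eq_sqrt_inner)
qed

lemma Eloss_subst:
  fixes \<Phi> :: "real^'l::finite^'h::finite \<Rightarrow> real^'l^'h" and m m' :: "real^'f::finite^'h"
  assumes orth: "orthogonal_transformation \<Phi>"
  and pw: "\<And>eps cs \<xi>. sample_loss a m' r' b' v' eps cs \<xi> = sample_loss a m r b v eps cs (\<Phi> \<xi>)"
  shows "Eloss (L::'l itself) P a m' r' b' v' = Eloss L P a m r b v"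
proof -
  have dim: "DIM(real^'l^'h) = CARD('h \<times> 'l)" by simp
  have "(LINT \<xi>|std_gauss. sample_loss a m' r' b' v' eps cs \<xi>) = (LINT \<xi>|std_gauss. sample_loss a m r b v eps cs \<xi>)" for eps :: 'l and cs
    using std_gauss_orth[OF dim orth, of "sample_loss a m r b v eps cs"] by (simp add: pw)
  then show ?thesis by (simp add: Eloss_def)
qed

lemma sample_loss_Q:
  "sample_loss a m (r ** Q) b v eps cs \<xi> = sample_loss a m r b v eps cs (Q ** \<xi>)"
  by (simp add: sample_loss_def matrix_mul_assoc)

lemma sample_loss_perm:
  fixes \<sigma> :: "'h::finite \<Rightarrow> 'h" and m :: "real^'f::finite^'h" and cs :: "real^'l::finite^'f"
  assumes inv: "\<And>x. \<sigma> (\<sigma> x) = x"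
  shows "sample_loss a (\<chi> h. m$(\<sigma> h)) (\<chi> i j. r$(\<sigma> i)$(\<sigma> j)) (\<chi> h. b$(\<sigma> h)) v eps cs \<xi>
       = sample_loss a m r b v eps cs (\<chi> h l. \<xi>$(\<sigma> h)$l)"
proof -
  define c0 where "c0 = m ** cs + r ** (\<chi> h l. \<xi>$(\<sigma> h)$l)"
  have chi: "(\<chi> h. m$(\<sigma> h)) ** cs + (\<chi> i j. r$(\<sigma> i)$(\<sigma> j)) ** \<xi> = (\<chi> h. c0$(\<sigma> h))"
  proof -
    have "(\<Sum>j\<in>UNIV. r$(\<sigma> h)$(\<sigma> j) * \<xi>$j$l) = (\<Sum>k\<in>UNIV. r$(\<sigma> h)$k * \<xi>$(\<sigma> k)$l)" for h l
      using sum_invol[OF inv, of "\<lambda>k. r$(\<sigma> h)$k * \<xi>$(\<sigma> k)$l"] by (simp add: inv)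
    then show ?thesis by (simp add: vec_eq_iff c0_def matrix_matrix_mult_def)
  qed
  have act: "act_fun a (\<chi> h. c0$(\<sigma> h)) (\<chi> h. b$(\<sigma> h)) v h l = act_fun a c0 b v (\<sigma> h) l" for h l
  proof -
    have "(\<Sum>h'\<in>UNIV. \<Sum>l'\<in>UNIV. exp (c0$(\<sigma> h')$l' + b$(\<sigma> h'))) = (\<Sum>h'\<in>UNIV. \<Sum>l'\<in>UNIV. exp (c0$h'$l' + b$h'))"
      by (rule sum_invol[OF inv])
    then show ?thesis by (cases a) (simp_all add: act_fun_def)
  qed
  have "(\<Sum>h\<in>UNIV. act_fun a c0 b v (\<sigma> h) l) = (\<Sum>h\<in>UNIV. act_fun a c0 b v h l)" for l
    by (rule sum_invol[OF inv])
  then show ?thesis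
    by (simp add: sample_loss_def Let_def chi act) (simp add: c0_def)
qed



definition sw :: "'a \<Rightarrow> 'a \<Rightarrow> 'a \<Rightarrow> 'a" where
  "sw i k x = (if x = i then k else if x = k then i else x)"

lemma sw_invol[simp]: "sw i k (sw i k x) = x" by (auto simp: sw_def)
lemma sw_eq_iff[simp]: "sw i k x = sw i k y \<longleftrightarrow> x = y" by (auto simp: sw_def)

definition TP :: "('h::finite \<Rightarrow> 'h) \<Rightarrow> (real^'f::finite^'h) \<times> (real^'h^'h) \<times> (real^'h) \<times> real
    \<Rightarrow> (real^'f^'h) \<times> (real^'h^'h) \<times> (real^'h) \<times> real" where
  "TP \<sigma> x = (case x of (m, r, b, v) \<Rightarrow> ((\<chi> h. m$(\<sigma> h)), (\<chi> i j. r$(\<sigma> i)$(\<sigma> j)), (\<chi> h. b$(\<sigma> h)), v))"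

definition TQ :: "real^'h::finite^'h \<Rightarrow> (real^'f::finite^'h) \<times> (real^'h^'h) \<times> (real^'h) \<times> real
    \<Rightarrow> (real^'f^'h) \<times> (real^'h^'h) \<times> (real^'h) \<times> real" where
  "TQ Q x = (case x of (m, r, b, v) \<Rightarrow> (m, r ** Q, b, v))"

lemma inner_perm1:
  fixes \<sigma> :: "'h::finite \<Rightarrow> 'h" and m m2 :: "'a::real_inner^'h"
  assumes inv: "\<And>x. \<sigma> (\<sigma> x) = x"
  shows "(\<chi> h. m$(\<sigma> h)) \<bullet> m2 = m \<bullet> (\<chi> h. m2$(\<sigma> h))"
  using sum_invol[OF inv, of "\<lambda>h. m$h \<bullet> m2$(\<sigma> h)"] by (simp add: inner_vec_def inv)

lemma inner_perm2:
  fixes \<sigma> :: "'h::finite \<Rightarrow> 'h" and r r2 :: "real^'h^'h"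
  assumes inv: "\<And>x. \<sigma> (\<sigma> x) = x"
  shows "(\<chi> i j. r$(\<sigma> i)$(\<sigma> j)) \<bullet> r2 = r \<bullet> (\<chi> i j. r2$(\<sigma> i)$(\<sigma> j))"
proof -
  have "(\<chi> i j. r$(\<sigma> i)$(\<sigma> j)) \<bullet> r2 = (\<Sum>i\<in>UNIV. \<Sum>j\<in>UNIV. r$(\<sigma> i)$(\<sigma> j) * r2$i$j)"
    by (simp add: inner_mat)
  also have "\<dots> = (\<Sum>i\<in>UNIV. \<Sum>j\<in>UNIV. r$(\<sigma> i)$j * r2$i$(\<sigma> j))"
    using sum_invol[OF inv] by (metis (no_types, lifting) inv sum.cong)
  also have "\<dots> = (\<Sum>i\<in>UNIV. \<Sum>j\<in>UNIV. r$i$j * r2$(\<sigma> i)$(\<sigma> j))"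
    using sum_invol[OF inv, of "\<lambda>i. \<Sum>j\<in>UNIV. r$i$j * r2$(\<sigma> i)$(\<sigma> j)"] by (simp add: inv)
  also have "\<dots> = r \<bullet> (\<chi> i j. r2$(\<sigma> i)$(\<sigma> j))" by (simp add: inner_mat)
  finally show ?thesis .
qed

lemma TP_props:
  fixes \<sigma> :: "'h::finite \<Rightarrow> 'h"
  assumes inv: "\<And>x. \<sigma> (\<sigma> x) = x"
  shows "linear (TP \<sigma> :: (real^'f::finite^'h) \<times> (real^'h^'h) \<times> (real^'h) \<times> real \<Rightarrow> _)"
    and "\<And>x::(real^'f^'h) \<times> (real^'h^'h) \<times> (real^'h) \<times> real. TP \<sigma> (TP \<sigma> x) = x"
    and "\<And>x y::(real^'f^'h) \<times> (real^'h^'h) \<times> (real^'h) \<times> real. TP \<sigma> x \<bullet> y = x \<bullet> TP \<sigma> y"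
    and "\<And>x::(real^'f^'h) \<times> (real^'h^'h) \<times> (real^'h) \<times> real. Eloss_param P a (L::'l::finite itself) (TP \<sigma> x) = Eloss_param P a L x"
proof -
  show "linear (TP \<sigma> :: (real^'f^'h) \<times> (real^'h^'h) \<times> (real^'h) \<times> real \<Rightarrow> _)"
  proof (rule linearI)
    fix x y :: "(real^'f^'h) \<times> (real^'h^'h) \<times> (real^'h) \<times> real" and c :: real
    show "TP \<sigma> (x + y) = TP \<sigma> x + TP \<sigma> y" by (cases x, cases y) (simp add: TP_def vec_eq_iff)
    show "TP \<sigma> (c *\<^sub>R x) = c *\<^sub>R TP \<sigma> x" by (cases x) (simp add: TP_def vec_eq_iff)
  qed
  show "TP \<sigma> (TP \<sigma> x) = x" for x :: "(real^'f^'h) \<times> (real^'h^'h) \<times> (real^'h) \<times> real"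
    by (cases x) (simp add: TP_def vec_eq_iff inv)
  show "TP \<sigma> x \<bullet> y = x \<bullet> TP \<sigma> y" for x y :: "(real^'f^'h) \<times> (real^'h^'h) \<times> (real^'h) \<times> real"
    by (cases x, cases y) (simp add: TP_def inner_perm1[OF inv] inner_perm2[OF inv])
  show "Eloss_param P a (L::'l::finite itself) (TP \<sigma> x) = Eloss_param P a L x"
    for x :: "(real^'f^'h) \<times> (real^'h^'h) \<times> (real^'h) \<times> real"
  proof (cases x)
    case (fields m r b v)
    have "Eloss L P a (\<chi> h. m$(\<sigma> h)) (\<chi> i j. r$(\<sigma> i)$(\<sigma> j)) (\<chi> h. b$(\<sigma> h)) v = Eloss L P a m r b v"
      by (rule Eloss_subst[OF orth_perm[OF inv]]) (rule sample_loss_perm[OF inv])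
    then show ?thesis by (simp add: fields TP_def Eloss_param_def)
  qed
qed

lemma TQ_props:
  fixes Q :: "real^'h::finite^'h"
  assumes sym: "transpose Q = Q" and inv: "Q ** Q = mat 1"
  shows "linear (TQ Q :: (real^'f::finite^'h) \<times> (real^'h^'h) \<times> (real^'h) \<times> real \<Rightarrow> _)"
    and "\<And>x::(real^'f^'h) \<times> (real^'h^'h) \<times> (real^'h) \<times> real. TQ Q (TQ Q x) = x"
    and "\<And>x y::(real^'f^'h) \<times> (real^'h^'h) \<times> (real^'h) \<times> real. TQ Q x \<bullet> y = x \<bullet> TQ Q y"
    and "\<And>x::(real^'f^'h) \<times> (real^'h^'h) \<times> (real^'h) \<times> real. Eloss_param P a (L::'l::finite itself) (TQ Q x) = Eloss_param P a L x"
proof -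
  show "linear (TQ Q :: (real^'f^'h) \<times> (real^'h^'h) \<times> (real^'h) \<times> real \<Rightarrow> _)"
  proof (rule linearI)
    fix x y :: "(real^'f^'h) \<times> (real^'h^'h) \<times> (real^'h) \<times> real" and c :: real
    show "TQ Q (x + y) = TQ Q x + TQ Q y" by (cases x, cases y) (simp add: TQ_def vec_eq_iff matrix_matrix_mult_def sum.distrib algebra_simps)
    show "TQ Q (c *\<^sub>R x) = c *\<^sub>R TQ Q x" by (cases x) (simp add: TQ_def scalar_matrix_assoc)
  qed
  show "TQ Q (TQ Q x) = x" for x :: "(real^'f^'h) \<times> (real^'h^'h) \<times> (real^'h) \<times> real"
    by (cases x) (simp add: TQ_def matrix_mul_assoc[symmetric] inv)
  show "TQ Q x \<bullet> y = x \<bullet> TQ Q y" for x y :: "(real^'f^'h) \<times> (real^'h^'h) \<times> (real^'h) \<times> real"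
    by (cases x, cases y) (simp add: TQ_def right_adj sym)
  show "Eloss_param P a (L::'l::finite itself) (TQ Q x) = Eloss_param P a L x"
    for x :: "(real^'f^'h) \<times> (real^'h^'h) \<times> (real^'h) \<times> real"
  proof (cases x)
    case (fields m r b v)
    have "Eloss L P a m (r ** Q) b v = Eloss L P a m r b v"
      by (rule Eloss_subst[OF orth_leftQ[OF sym inv]]) (rule sample_loss_Q)
    then show ?thesis by (simp add: fields TQ_def Eloss_param_def)
  qed
qed



lemma TP_fixed_iff:
  "TP \<sigma> x = x \<longleftrightarrow> (\<forall>h. fst x $ \<sigma> h = fst x $ h) \<and> (\<forall>i j. fst (snd x) $ \<sigma> i $ \<sigma> j = fst (snd x) $ i $ j)
     \<and> (\<forall>h. fst (snd (snd x)) $ \<sigma> h = fst (snd (snd x)) $ h)"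
  by (cases x) (auto simp: TP_def vec_eq_iff)

lemma TQ_fixed_iff: "TQ Q x = x \<longleftrightarrow> fst (snd x) ** Q = fst (snd x)"
  by (cases x) (auto simp: TQ_def)

definition Q2 :: "real^'h::finite^'h" where
  "Q2 = (\<chi> i j. (if i = j then 1 else 0) - 2 / real CARD('h))"

lemma Q2_sym: "transpose Q2 = Q2"
  by (auto simp: Q2_def transpose_def vec_eq_iff)

lemma mult_Q2: "(R ** (Q2::real^'h::finite^'h))$i$j = R$i$j - 2 / real CARD('h) * (\<Sum>k\<in>UNIV. R$i$k)"
proof -
  have "(R ** (Q2::real^'h::finite^'h))$i$j = (\<Sum>k\<in>UNIV. R$i$k * (if k = j then 1 else 0) - 2 / real CARD('h) * R$i$k)"
    by (simp add: matrix_matrix_mult_def Q2_def algebra_simps)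
  also have "\<dots> = (\<Sum>k\<in>UNIV. R$i$k * (if k = j then 1 else 0)) - (\<Sum>k\<in>UNIV. 2 / real CARD('h) * R$i$k)"
    by (rule sum_subtractf)
  also have "\<dots> = R$i$j - 2 / real CARD('h) * (\<Sum>k\<in>UNIV. R$i$k)"
  proof -
    have "(\<Sum>k\<in>UNIV. R$i$k * (if k = j then 1 else 0)) = (\<Sum>k\<in>UNIV. if k = j then R$i$k else 0)"
      by (rule sum.cong) auto
    moreover have "(\<Sum>k\<in>UNIV. 2 / real CARD('h) * R$i$k) = 2 / real CARD('h) * (\<Sum>k\<in>UNIV. R$i$k)"
      by (rule sum_distrib_left[symmetric])
    ultimately show ?thesis by simp
  qed
  finally show ?thesis .
qed

lemma Q2_inv: "(Q2::real^'h::finite^'h) ** Q2 = mat 1"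
proof -
  have H: "real CARD('h) > 0" by simp
  have "(Q2 ** (Q2::real^'h::finite^'h))$i$j = (mat 1 :: real^'h^'h)$i$j" for i j
  proof -
    have s: "(\<Sum>k\<in>UNIV. (Q2::real^'h^'h)$i$k) = 1 - 2" 
      using H by (simp add: Q2_def sum_subtractf)
    show ?thesis using H unfolding mult_Q2 s by (simp add: Q2_def mat_def)
  qed
  then show ?thesis unfolding vec_eq_iff by blast
qed

lemma Q2_fix_iff: "R ** (Q2::real^'h::finite^'h) = R \<longleftrightarrow> (\<forall>i. (\<Sum>k\<in>UNIV. R$i$k) = 0)"
  by (auto simp: vec_eq_iff mult_Q2)

definition Pm :: "('h::finite \<Rightarrow> 'h) \<Rightarrow> real^'h^'h" where
  "Pm \<sigma> = (\<chi> i j. if \<sigma> i = j then 1 else 0)"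

lemma mult_Pm:
  assumes inv: "\<And>x. \<sigma> (\<sigma> x) = x"
  shows "(R ** Pm \<sigma>)$i$j = R$i$(\<sigma> j)"
proof -
  have eqv: "(\<sigma> k = j) = (k = \<sigma> j)" for k
  proof
    assume "\<sigma> k = j" then have "\<sigma> (\<sigma> k) = \<sigma> j" by simp
    then show "k = \<sigma> j" by (simp add: inv)
  next
    assume "k = \<sigma> j" then show "\<sigma> k = j" by (simp add: inv)
  qed
  have "(R ** Pm \<sigma>)$i$j = (\<Sum>k\<in>UNIV. if k = \<sigma> j then R$i$k else 0)"
    unfolding matrix_matrix_mult_def Pm_def by (simp add: eqv if_distrib cong: if_cong)
  then show ?thesis by simp
qed

lemma Pm_sym: assumes inv: "\<And>x. \<sigma> (\<sigma> x) = x" shows "transpose (Pm \<sigma>) = Pm \<sigma>"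
  by (auto simp: Pm_def transpose_def vec_eq_iff inv)

lemma Pm_inv: assumes inv: "\<And>x. \<sigma> (\<sigma> x) = x" shows "Pm \<sigma> ** Pm \<sigma> = mat 1"
proof -
  have "(Pm \<sigma> ** Pm \<sigma>)$i$j = (mat 1 :: real^'a^'a)$i$j" for i j
  proof -
    have "(Pm \<sigma> ** Pm \<sigma>)$i$j = (Pm \<sigma>)$i$(\<sigma> j)" by (rule mult_Pm[OF inv])
    also have "\<dots> = (if \<sigma> i = \<sigma> j then 1 else 0)" unfolding Pm_def by simp
    also have "(\<sigma> i = \<sigma> j) = (i = j)" by (metis inv)
    finally show ?thesis by (simp add: mat_def)
  qed
  then show ?thesis unfolding vec_eq_iff by blast
qed



lemma sum_delta_mult: "(\<Sum>c\<in>(UNIV::'a::finite set). x * (if i = c then 1 else 0)) = (x::real)"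
proof -
  have "(\<Sum>c\<in>(UNIV::'a set). x * (if i = c then 1 else 0)) = (\<Sum>c\<in>UNIV. if i = c then x else 0)"
    by (rule sum.cong) auto
  then show ?thesis by simp
qed

theorem lemma3:
  fixes P :: "(real^'f::finite) measure"
    and a :: activation
    and G :: "(real^'f^'h::finite) \<times> (real^'h^'h) \<times> (real^'h) \<times> real
              \<Rightarrow> (real^'f^'h) \<times> (real^'h^'h) \<times> (real^'h) \<times> real"
    and p :: "real \<Rightarrow> (real^'f^'h) \<times> (real^'h^'h) \<times> (real^'h) \<times> real"
    and t1 :: real
  assumes "prob_space P" and "sets P = sets borel"
    and grad: "\<And>x. (Eloss_param P a TYPE('l::finite) has_derivative (\<lambda>y. G x \<bullet> y)) (at x)"
    and lip: "\<And>x. \<exists>e>0. \<exists>K. K-lipschitz_on (cball x e) G"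
    and flow: "\<And>t. t \<in> {0..t1} \<Longrightarrow> (p has_vector_derivative (- G (p t))) (at t within {0..t1})"
    and init: "(fst (p 0), fst (snd (p 0)), fst (snd (snd (p 0)))) \<in> unspec_manifold"
  shows "\<forall>t\<in>{0..t1}. (fst (p t), fst (snd (p t)), fst (snd (snd (p t)))) \<in> unspec_manifold"
proof
  fix t assume t: "t \<in> {0..t1}"
  have t0: "0 \<in> {0..t1}" using t by auto
  have fixP: "TP \<sigma> (p u) = p u"
    if inv: "\<And>x. \<sigma> (\<sigma> x) = x" and s: "s \<in> {0..t1}" "TP \<sigma> (p s) = p s" and u: "u \<in> {0..t1}" for \<sigma> s u
    by (rule flow_sym[OF grad lip flow TP_props(1)[OF inv] TP_props(2)[OF inv] TP_props(3)[OF inv]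
          TP_props(4)[OF inv] s u])
  have fixQ: "TQ Q (p u) = p u"
    if sym: "transpose Q = Q" and inv: "Q ** Q = mat 1" and s: "s \<in> {0..t1}" "TQ Q (p s) = p s"
      and u: "u \<in> {0..t1}" for Q s u
    by (rule flow_sym[OF grad lip flow TQ_props(1)[OF sym inv] TQ_props(2)[OF sym inv] TQ_props(3)[OF sym inv]
          TQ_props(4)[OF sym inv] s u])
  define R where "R u = fst (snd (p u))" for u
  define M where "M u = fst (p u)" for u
  define B where "B u = fst (snd (snd (p u)))" for u
  obtain mt r1 r2 bt where m0: "\<forall>h. M 0 $ h = mt" and r1: "r1 > 0" "r1 + real CARD('h) * r2 > 0"
    and r0: "\<forall>i j. R 0 $ i $ j = r1 * (if i = j then 1 else 0) + r2" and b0: "\<forall>h. B 0 $ h = bt"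
    using init by (auto simp: unspec_manifold_def M_def R_def B_def)
  have swfix: "TP (sw i k) (p u) = p u" if u: "u \<in> {0..t1}" for i k u
  proof (rule fixP[OF sw_invol t0 _ u])
    show "TP (sw i k) (p 0) = p 0" unfolding TP_fixed_iff
      using m0 r0 b0 by (simp add: M_def[symmetric] R_def[symmetric] B_def[symmetric])
  qed
  have Rsym: "R u $ (sw i k a) $ (sw i k c) = R u $ a $ c" if "u \<in> {0..t1}" for u i k a c
    using swfix[OF that, of i k] unfolding TP_fixed_iff R_def by blast
  have Meq: "M u $ k = M u $ i" if "u \<in> {0..t1}" for u i k
    using swfix[OF that, of i k] unfolding TP_fixed_iff M_def by (metis sw_def)
  have Beq: "B u $ k = B u $ i" if "u \<in> {0..t1}" for u i k
    using swfix[OF that, of i k] unfolding TP_fixed_iff B_def by (metis sw_def)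
  have diag: "R u $ k $ k = R u $ i $ i" if "u \<in> {0..t1}" for u i k
    using Rsym[OF that, of i k i i] by (simp add: sw_def)
  have offA: "R u $ i $ j = R u $ k $ j" if "u \<in> {0..t1}" "i \<noteq> j" "k \<noteq> j" for u i j k
    using Rsym[OF that(1), of i k i j] that by (simp add: sw_def)
  have offB: "R u $ i $ j = R u $ i $ l" if "u \<in> {0..t1}" "i \<noteq> j" "i \<noteq> l" for u i j l
    using Rsym[OF that(1), of j l i j] that by (simp add: sw_def)
  have offS: "R u $ i $ j = R u $ j $ i" if "u \<in> {0..t1}" "i \<noteq> j" for u i j
    using Rsym[OF that(1), of i j i j] that by (simp add: sw_def)
  have off: "R u $ i $ j = R u $ k $ l" if "u \<in> {0..t1}" "i \<noteq> j" "k \<noteq> l" for u i j k l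
  proof (cases "k = j")
    case False
    then show ?thesis using offA[OF that(1,2) False] offB[OF that(1) False that(3)] by simp
  next
    case True
    then show ?thesis using offS[OF that(1,2)] offB[OF that(1) that(2)[symmetric], of l] that(3) by simp
  qed
  have rowsum: "(\<Sum>c\<in>UNIV. R u $ i $ c) = (\<Sum>c\<in>UNIV. R u $ i0 $ c)" if u: "u \<in> {0..t1}" for u i i0
  proof -
    have "(\<Sum>c\<in>UNIV. R u $ i $ c) = (\<Sum>c\<in>UNIV. R u $ i0 $ (sw i i0 c))"
      using Rsym[OF u, of i i0 i] by (simp add: sw_def)
    also have "\<dots> = (\<Sum>c\<in>UNIV. R u $ i0 $ c)" by (rule sum_invol) simp
    finally show ?thesis .
  qed
  have cp: "continuous_on {0..t1} p"
    using flow continuous_on_eq_continuous_within has_vector_derivative_continuous by blast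
  define i0 :: 'h where "i0 = undefined"
  define lam2 where "lam2 u = (\<Sum>c\<in>UNIV. R u $ i0 $ c)" for u
  have lam2_0: "lam2 0 = r1 + real CARD('h) * r2"
    by (simp add: lam2_def r0 sum.distrib sum_delta_mult)
  have lam2_ne: "lam2 s \<noteq> 0" if s: "s \<in> {0..t1}" for s
  proof
    assume "lam2 s = 0"
    then have "\<forall>i. (\<Sum>k\<in>UNIV. R s $ i $ k) = 0" using rowsum[OF s, of _ i0] by (simp add: lam2_def)
    then have "TQ Q2 (p s) = p s" by (simp add: TQ_fixed_iff Q2_fix_iff R_def)
    then have "TQ Q2 (p 0) = p 0" by (rule fixQ[OF Q2_sym Q2_inv s _ t0])
    then have "\<forall>i. (\<Sum>k\<in>UNIV. R 0 $ i $ k) = 0" by (simp add: TQ_fixed_iff Q2_fix_iff R_def)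
    then have "lam2 0 = 0" by (simp add: lam2_def)
    with lam2_0 r1 show False by simp
  qed
  have cont2: "continuous_on {0..t1} lam2" unfolding lam2_def R_def by (intro continuous_intros cp)
  have pos_lemma: "f t > 0" if c: "continuous_on {0..t1} f" and ne: "\<And>s. s \<in> {0..t1} \<Longrightarrow> f s \<noteq> 0"
    and f0: "f 0 > 0" for f :: "real \<Rightarrow> real"
  proof (rule ccontr)
    assume "\<not> f t > 0"
    then have "f t \<le> 0" by simp
    moreover have "continuous_on {0..t} f" using c t by (auto intro: continuous_on_subset)
    ultimately obtain x where "0 \<le> x" "x \<le> t" "f x = 0"
      using IVT2'[of f t 0 0] f0 t by auto
    with ne[of x] t show False by auto
  qed
  have lam2_pos: "lam2 t > 0"
    by (rule pos_lemma[OF cont2 lam2_ne]) (use lam2_0 r1 in auto)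
  have eqt: "(fst (p t), fst (snd (p t)), fst (snd (snd (p t)))) = (M t, R t, B t)"
    by (simp add: M_def R_def B_def)
  have mex: "\<exists>mt. \<forall>h. M t $ h = mt" by (intro exI[of _ "M t $ i0"] allI Meq[OF t])
  have bex: "\<exists>bt. \<forall>h. B t $ h = bt" by (intro exI[of _ "B t $ i0"] allI Beq[OF t])
  have rex: "\<exists>r1 r2::real. r1 > 0 \<and> r1 + real CARD('h) * r2 > 0 \<and>
         (\<forall>i j. R t $ i $ j = r1 * (if i = j then 1 else 0) + r2)"
  proof (cases "\<exists>j0. j0 \<noteq> i0")
    case True
    then obtain j0 where j0: "j0 \<noteq> i0" by blast
    define lam1 where "lam1 u = R u $ i0 $ i0 - R u $ i0 $ j0" for u
    have lam1_0: "lam1 0 = r1" using j0 by (simp add: lam1_def r0)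
    have lam1_ne: "lam1 s \<noteq> 0" if s: "s \<in> {0..t1}" for s
    proof
      assume h: "lam1 s = 0"
      have allc: "R s $ i $ j = R s $ i0 $ i0" for i j
      proof (cases "i = j")
        case True then show ?thesis using diag[OF s] by simp
      next
        case False
        then show ?thesis using off[OF s False j0[symmetric]] h by (simp add: lam1_def)
      qed
      have "(R s ** Pm (sw i0 j0))$i$j = R s $ i $ j" for i j
      proof -
        have "(R s ** Pm (sw i0 j0))$i$j = R s $ i $ (sw i0 j0 j)"
          by (rule mult_Pm[of "sw i0 j0", OF sw_invol])
        also have "\<dots> = R s $ i0 $ i0" by (rule allc)
        also have "\<dots> = R s $ i $ j" by (rule allc[symmetric])
        finally show ?thesis .
      qed
      then have "R s ** Pm (sw i0 j0) = R s" unfolding vec_eq_iff by blast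
      then have "TQ (Pm (sw i0 j0)) (p s) = p s" by (simp add: TQ_fixed_iff R_def)
      then have "TQ (Pm (sw i0 j0)) (p 0) = p 0"
        by (rule fixQ[OF Pm_sym[OF sw_invol] Pm_inv[OF sw_invol] s _ t0])
      then have "R 0 ** Pm (sw i0 j0) = R 0" by (simp add: TQ_fixed_iff R_def)
      then have "(R 0 ** Pm (sw i0 j0)) $ i0 $ i0 = R 0 $ i0 $ i0" by simp
      then have "R 0 $ i0 $ j0 = R 0 $ i0 $ i0" by (simp add: mult_Pm[OF sw_invol] sw_def)
      then show False using r0 r1 j0 by simp
    qed
    have cont1: "continuous_on {0..t1} lam1" unfolding lam1_def R_def by (intro continuous_intros cp)
    have lam1_pos: "lam1 t > 0"
      by (rule pos_lemma[OF cont1 lam1_ne]) (use lam1_0 r1 in auto)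
    define A where "A = R t $ i0 $ i0"
    define C where "C = R t $ i0 $ j0"
    have Rform: "R t $ i $ j = (A - C) * (if i = j then 1 else 0) + C" for i j
    proof (cases "i = j")
      case True then show ?thesis using diag[OF t] by (simp add: A_def)
    next
      case False then show ?thesis using off[OF t False j0[symmetric]] by (simp add: C_def)
    qed
    have "lam2 t = (\<Sum>c\<in>UNIV. (A - C) * (if i0 = c then 1 else 0) + C)"
      by (simp add: lam2_def Rform)
    also have "\<dots> = (A - C) + real CARD('h) * C"
      by (simp add: sum.distrib sum_delta_mult)
    finally have "lam2 t = (A - C) + real CARD('h) * C" .
    then have g2: "(A - C) + real CARD('h) * C > 0" using lam2_pos by simp
    have g1: "A - C > 0" using lam1_pos by (simp add: lam1_def A_def C_def)
    show ?thesis by (intro exI[of _ "A - C"] exI[of _ C] conjI allI g1 g2 Rform)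
  next
    case False
    then have U: "UNIV = {i0}" by auto
    define A0 where "A0 = R t $ i0 $ i0"
    have "lam2 t = A0" by (simp add: lam2_def U A0_def)
    then have g: "A0 > 0" "A0 + real CARD('h) * 0 > 0" using lam2_pos by simp_all
    have Rc: "R t $ i $ j = A0 * (if i = j then 1 else 0) + 0" for i j
    proof -
      have "i = i0" "j = i0" using U by auto
      then show ?thesis by (simp add: A0_def)
    qed
    show ?thesis by (intro exI[of _ A0] exI[of _ 0] conjI allI g Rc)
  qed
  show "(fst (p t), fst (snd (p t)), fst (snd (snd (p t)))) \<in> unspec_manifold"
    unfolding eqt unspec_manifold_def using mex bex rex by blast
qed

end
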